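(* Let $\nu$ be an infinite cardinal, let $\mu=\operatorname{cf}(\nu)$, and let $\lambda$ be a cardinal. If $\mu\not\to_{hc}(\mu)^2_\lambda$, then $\nu\not\to_{hc}(\nu)^2_\lambda$.
   Context: $[S]^2$ denotes the set of $2$-element subsets of $S$. A graph $G=(V,E)$ is highly connected if for every $D\subseteq V$ with $|D|<|V|$ the graph induced on $V\setminus D$ is connected. For cardinals $\nu,\mu,\lambda$, $\nu\to_{hc}(\mu)^2_\lambda$ means: for every $c:[\nu]^2\to\lambda$ there exist $\xi<\lambda$ and $X\subseteq\nu$ with $|X|=\mu$ such that $(X,c^{-1}(\xi)\cap[X]^2)$ is highly connected; $\not\to_{hc}$ is its negation. *)

theory Defs
  imports Main "HOL-Library.Ramsey"
begin

unbundle cardinal_syntax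

definition graph_connected :: "'a set \<Rightarrow> ('a \<Rightarrow> 'a \<Rightarrow> bool) \<Rightarrow> bool" where
  "graph_connected W E \<longleftrightarrow>
     (\<forall>x\<in>W. \<forall>y\<in>W. (x, y) \<in> ({(u, v). u \<in> W \<and> v \<in> W \<and> u \<noteq> v \<and> E u v})\<^sup>*)"

definition highly_connected :: "'a set \<Rightarrow> ('a \<Rightarrow> 'a \<Rightarrow> bool) \<Rightarrow> bool" where
  "highly_connected V E \<longleftrightarrow> (\<forall>D. D \<subseteq> V \<and> |D| <o |V| \<longrightarrow> graph_connected (V - D) E)"

text \<open>hc_arrow N M L: |N| \<rightarrow>_hc (|M|)^2_|L|. Colourings are maps on 2-element subsets.\<close>
definition hc_arrow :: "'a set \<Rightarrow> 'b set \<Rightarrow> 'l set \<Rightarrow> bool" where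
  "hc_arrow N M L \<longleftrightarrow>
     (\<forall>c :: 'a set \<Rightarrow> 'l. (\<forall>e \<in> [N]\<^bsup>2\<^esup>. c e \<in> L) \<longrightarrow>
        (\<exists>\<xi>\<in>L. \<exists>X. X \<subseteq> N \<and> |X| =o |M| \<and>
           highly_connected X (\<lambda>x y. {x, y} \<in> [X]\<^bsup>2\<^esup> \<and> c {x, y} = \<xi>)))"

end

theory Submission
  imports Defs
begin

theorem mainTheorem5:
  fixes V :: "'a set" and r :: "'a rel" and K :: "'a set" and L :: "'l set"
  assumes "card_order_on V r"
    and "infinite V"
    and "K \<subseteq> V" and "cofinal K r"
    and "\<forall>K'. K' \<subseteq> V \<and> cofinal K' r \<longrightarrow> |K| \<le>o |K'|"
    and "\<not> hc_arrow K K L"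
  shows "\<not> hc_arrow V V L"
proof -
  from assms(6) obtain c where cL: "\<forall>e\<in>[K]\<^bsup>2\<^esup>. c e \<in> L"
    and noK: "\<forall>\<xi>\<in>L. \<forall>X. X \<subseteq> K \<and> |X| =o |K| \<longrightarrow>
          \<not> highly_connected X (\<lambda>x y. {x, y} \<in> [X]\<^bsup>2\<^esup> \<and> c {x, y} = \<xi>)"
    unfolding hc_arrow_def by blast
  have WO: "well_order_on V r" using assms(1) card_order_on_well_order_on by blast
  have F: "Field r = V" and CO: "Card_order r" using card_order_on_Card_order[OF assms(1)] by auto
  have rV: "r =o |V|" using card_of_unique[OF assms(1)] .
  have refl: "\<And>a. a \<in> V \<Longrightarrow> (a,a) \<in> r"
    using WO unfolding well_order_on_def linear_order_on_def partial_order_on_def preorder_on_def refl_on_def by blast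
  have antis: "\<And>a b. (a,b) \<in> r \<Longrightarrow> (b,a) \<in> r \<Longrightarrow> a = b"
    using WO unfolding well_order_on_def linear_order_on_def partial_order_on_def antisym_def by blast
  have trans: "\<And>a b d. (a,b) \<in> r \<Longrightarrow> (b,d) \<in> r \<Longrightarrow> (a,d) \<in> r"
    using WO unfolding well_order_on_def linear_order_on_def partial_order_on_def preorder_on_def trans_def by blast
  have total: "\<And>a b. a \<in> V \<Longrightarrow> b \<in> V \<Longrightarrow> a \<noteq> b \<Longrightarrow> (a,b) \<in> r \<or> (b,a) \<in> r"
    using WO unfolding well_order_on_def linear_order_on_def total_on_def by blast
  have inV: "\<And>a b. (a,b) \<in> r \<Longrightarrow> a \<in> V \<and> b \<in> V" using F unfolding Field_def by blast
  have cof: "\<And>a. a \<in> V \<Longrightarrow> \<exists>b\<in>K. a \<noteq> b \<and> (a,b) \<in> r"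
    using assms(4) F unfolding cofinal_def by blast
  have key: "\<exists>a'. |underS r a'| <o |V| \<and> (\<forall>k\<in>D. \<forall>v. (v,k) \<in> r \<longrightarrow> v \<in> underS r a')"
    if D: "D \<subseteq> K" "|D| <o |K|" for D
  proof -
    have "\<not> cofinal D r"
    proof
      assume "cofinal D r"
      then have "|K| \<le>o |D|" using assms(5) D assms(3) by blast
      then show False using D(2) not_ordLess_ordLeq by blast
    qed
    then obtain a where a: "a \<in> V" and na: "\<forall>b\<in>D. \<not> (a \<noteq> b \<and> (a,b) \<in> r)"
      unfolding cofinal_def F by blast
    obtain a' where a': "a' \<in> K" "a \<noteq> a'" "(a,a') \<in> r" using cof[OF a] by blast
    have "a' \<in> V" using a' assms(3) by blast
    have "|underS r a'| <o r" using card_of_underS[OF CO] \<open>a' \<in> V\<close> F by blast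
    then have u: "|underS r a'| <o |V|" using rV ordLess_ordIso_trans by blast
    have "\<forall>k\<in>D. \<forall>v. (v,k) \<in> r \<longrightarrow> v \<in> underS r a'"
    proof (intro ballI allI impI)
      fix k v assume k: "k \<in> D" and vk: "(v,k) \<in> r"
      have kV: "k \<in> V" using k D(1) assms(3) by blast
      have "(k,a) \<in> r"
      proof (cases "k = a")
        case True then show ?thesis using refl a by simp
      next
        case False then show ?thesis using total[OF kV a] na k by fastforce
      qed
      then have va: "(v,a) \<in> r" using trans vk by blast
      then have "(v,a') \<in> r" using trans a' by blast
      moreover have "v \<noteq> a'" using va a' antis by blast
      ultimately show "v \<in> underS r a'" unfolding underS_def by blast
    qed
    then show ?thesis using u by blast
  qed
  define \<pi> where "\<pi> v = (SOME k. k \<in> K \<and> (v,k) \<in> r)" for v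
  have \<pi>: "\<pi> v \<in> K \<and> (v, \<pi> v) \<in> r" if "v \<in> V" for v
  proof -
    have "\<exists>k. k \<in> K \<and> (v,k) \<in> r" using cof[OF that] by blast
    then show ?thesis unfolding \<pi>_def by (rule someI_ex)
  qed
  obtain a0 where "a0 \<in> V" using assms(2) by (metis finite.emptyI ex_in_conv)
  then obtain b where b: "b \<in> K" using cof by blast
  then obtain b' where b': "b' \<in> K" "b \<noteq> b'" using cof assms(3) by blast
  define \<xi>0 where "\<xi>0 = c {b, b'}"
  have "{b,b'} \<in> [K]\<^bsup>2\<^esup>" using b b' unfolding nsets_def by auto
  then have \<xi>0L: "\<xi>0 \<in> L" using cL \<xi>0_def by blast
  define c' where "c' e = (if card (\<pi> ` e) = 2 then c (\<pi> ` e) else \<xi>0)" for e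
  have c'L: "\<forall>e\<in>[V]\<^bsup>2\<^esup>. c' e \<in> L"
  proof
    fix e assume e: "e \<in> [V]\<^bsup>2\<^esup>"
    show "c' e \<in> L"
    proof (cases "card (\<pi> ` e) = 2")
      case True
      have "\<pi> ` e \<subseteq> K" using e \<pi> unfolding nsets_def by blast
      moreover have "finite (\<pi> ` e)" using e unfolding nsets_def by blast
      ultimately have "\<pi> ` e \<in> [K]\<^bsup>2\<^esup>" using True unfolding nsets_def by blast
      then show ?thesis using True cL c'_def by simp
    next
      case False then show ?thesis using \<xi>0L c'_def by simp
    qed
  qed
  have noV: "\<forall>\<xi>\<in>L. \<forall>X. X \<subseteq> V \<and> |X| =o |V| \<longrightarrow>
          \<not> highly_connected X (\<lambda>x y. {x, y} \<in> [X]\<^bsup>2\<^esup> \<and> c' {x, y} = \<xi>)"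
  proof (intro ballI allI impI notI)
    fix \<xi> X assume \<xi>: "\<xi> \<in> L" and X: "X \<subseteq> V \<and> |X| =o |V|"
      and hcX: "highly_connected X (\<lambda>x y. {x, y} \<in> [X]\<^bsup>2\<^esup> \<and> c' {x, y} = \<xi>)"
    define A where "A = \<pi> ` X"
    have AK: "A \<subseteq> K" using X \<pi> A_def by blast
    have XA: "|A| =o |K|"
    proof -
      have le: "|A| \<le>o |K|" using AK card_of_mono1 by blast
      have "\<not> |A| <o |K|"
      proof
        assume "|A| <o |K|"
        then obtain a' where u: "|underS r a'| <o |V|"
          and h: "\<forall>k\<in>A. \<forall>v. (v,k) \<in> r \<longrightarrow> v \<in> underS r a'" using key AK by blast
        have "X \<subseteq> underS r a'"
        proof
          fix v assume v: "v \<in> X"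
          then have "\<pi> v \<in> A" "(v, \<pi> v) \<in> r" using A_def \<pi> X by auto
          then show "v \<in> underS r a'" using h by blast
        qed
        then have "|X| \<le>o |underS r a'|" using card_of_mono1 by blast
        then have "|X| <o |V|" using u ordLeq_ordLess_trans by blast
        then show False using X not_ordLess_ordIso by blast
      qed
      then show ?thesis using le ordLeq_iff_ordLess_or_ordIso by blast
    qed
    have "highly_connected A (\<lambda>x y. {x, y} \<in> [A]\<^bsup>2\<^esup> \<and> c {x, y} = \<xi>)"
      unfolding highly_connected_def
    proof (intro allI impI)
      fix D assume D: "D \<subseteq> A \<and> |D| <o |A|"
      then have "|D| <o |K|" using XA ordLess_ordIso_trans by blast
      then obtain a' where u: "|underS r a'| <o |V|"
          and h: "\<forall>k\<in>D. \<forall>v. (v,k) \<in> r \<longrightarrow> v \<in> underS r a'" using key D AK by blast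
      define D' where "D' = {v\<in>X. \<pi> v \<in> D}"
      have "D' \<subseteq> underS r a'" using h \<pi> X unfolding D'_def by blast
      then have "|D'| \<le>o |underS r a'|" using card_of_mono1 by blast
      then have "|D'| <o |V|" using u ordLeq_ordLess_trans by blast
      moreover have "|V| =o |X|" using X ordIso_symmetric by blast
      ultimately have "|D'| <o |X|" using ordLess_ordIso_trans by blast
      moreover have "D' \<subseteq> X" unfolding D'_def by blast
      ultimately have gc: "graph_connected (X - D') (\<lambda>x y. {x, y} \<in> [X]\<^bsup>2\<^esup> \<and> c' {x, y} = \<xi>)"
        using hcX unfolding highly_connected_def by blast
      define R' where "R' = {(u, v). u \<in> X - D' \<and> v \<in> X - D' \<and> u \<noteq> v \<and>
                ({u, v} \<in> [X]\<^bsup>2\<^esup> \<and> c' {u, v} = \<xi>)}"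
      define RA where "RA = {(u, v). u \<in> A - D \<and> v \<in> A - D \<and> u \<noteq> v \<and>
                ({u, v} \<in> [A]\<^bsup>2\<^esup> \<and> c {u, v} = \<xi>)}"
      have proj: "(\<pi> u, \<pi> w) \<in> RA\<^sup>*" if "(u, w) \<in> R'\<^sup>*" for u w
        using that
      proof (induction rule: rtrancl_induct)
        case base then show ?case by simp
      next
        case (step v w)
        show ?case
        proof (cases "\<pi> v = \<pi> w")
          case True then show ?thesis using step.IH by simp
        next
          case False
          have vw: "v \<in> X - D'" "w \<in> X - D'" "c' {v, w} = \<xi>" using step.hyps(2) R'_def by auto
          have A1: "\<pi> v \<in> A - D" "\<pi> w \<in> A - D" using vw A_def D'_def by auto
          have "\<pi> ` {v, w} = {\<pi> v, \<pi> w}" by simp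
          moreover have "card {\<pi> v, \<pi> w} = 2" using False by simp
          ultimately have "c {\<pi> v, \<pi> w} = \<xi>" using vw(3) c'_def by simp
          moreover have "{\<pi> v, \<pi> w} \<in> [A]\<^bsup>2\<^esup>" using A1 False unfolding nsets_def by auto
          ultimately have "(\<pi> v, \<pi> w) \<in> RA" using A1 False RA_def by auto
          then show ?thesis by (rule rtrancl_into_rtrancl[OF step.IH])
        qed
      qed
      show "graph_connected (A - D) (\<lambda>x y. {x, y} \<in> [A]\<^bsup>2\<^esup> \<and> c {x, y} = \<xi>)"
        unfolding graph_connected_def
      proof (intro ballI)
        fix \<alpha> \<beta> assume \<alpha>: "\<alpha> \<in> A - D" and \<beta>: "\<beta> \<in> A - D"
        obtain x where x: "x \<in> X" "\<pi> x = \<alpha>" using \<alpha> A_def by blast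
        obtain y where y: "y \<in> X" "\<pi> y = \<beta>" using \<beta> A_def by blast
        have "x \<in> X - D'" "y \<in> X - D'" using x y \<alpha> \<beta> D'_def by auto
        then have "(x, y) \<in> R'\<^sup>*" using gc unfolding graph_connected_def R'_def by blast
        then have "(\<alpha>, \<beta>) \<in> RA\<^sup>*" using proj x y by blast
        then show "(\<alpha>, \<beta>) \<in> {(u, v). u \<in> A - D \<and> v \<in> A - D \<and> u \<noteq> v \<and>
                ({u, v} \<in> [A]\<^bsup>2\<^esup> \<and> c {u, v} = \<xi>)}\<^sup>*" unfolding RA_def .
      qed
    qed
    then show False using noK \<xi> AK XA by blast
  qed
  show ?thesis unfolding hc_arrow_def
  proof
    assume "\<forall>c. (\<forall>e\<in>[V]\<^bsup>2\<^esup>. c e \<in> L) \<longrightarrow>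
        (\<exists>\<xi>\<in>L. \<exists>X. X \<subseteq> V \<and> |X| =o |V| \<and> highly_connected X (\<lambda>x y. {x, y} \<in> [X]\<^bsup>2\<^esup> \<and> c {x, y} = \<xi>))"
    then have "\<exists>\<xi>\<in>L. \<exists>X. X \<subseteq> V \<and> |X| =o |V| \<and> highly_connected X (\<lambda>x y. {x, y} \<in> [X]\<^bsup>2\<^esup> \<and> c' {x, y} = \<xi>)"
      using c'L by blast
    then show False using noV by blast
  qed
qed

end
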